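(* Consider a ring gossip network with a source and $n$ end-nodes as described in the context, and let $\rho=\lambda_e/\lambda$. Let $F^{(n)}=\lim_{t\to\infty}\mathbb{E}[F_1(t)]$ denote the average binary freshness of a single end-node. Then $F^{(n)}\to0$ as $n\to\infty$, decreasing as $\left(\frac{1}{\rho}+\frac{1}{\rho^2}\right)n^{-1}$, i.e., $\lim_{n\to\infty}nF^{(n)}=\frac{1}{\rho}+\frac{1}{\rho^2}$.
   Context: Model: The information at the source is updated (a new version is generated) according to a Poisson process of rate $\lambda_e>0$. The source sends its current version to each end-node $j\in\{1,\dots,n\}$ according to a Poisson process of rate $\lambda/n$, where $\lambda>0$. The end-nodes form a bidirectional ring: each end-node $j$ sends its stored version to each of its two ring neighbors $j-1$ and $j+1$ (indices mod $n$) according to a Poisson process of rate $\lambda/2$ each. All processes are independent. A node receiving a version keeps the fresher of its stored and received versions. The binary freshness $F_j(t)$ of node $j$ is $1$ if node $j$ stores the current source version at time $t$ and $0$ otherwise; thus it becomes $0$ whenever the source generates a new version, becomes $1$ when the source updates node $j$, and becomes $\max(F_i,F_j)$ when node $i$ updates node $j$. *)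

theory Defs
  imports "HOL-Analysis.Analysis"
begin

text \<open>State of the ring network with n end-nodes (indexed 0..n-1; the paper's node j
is our node j-1): the set of end-nodes that currently store the current source version,
i.e. the set of j with binary freshness F_j = 1.\<close>

definition gossip_upd :: "nat \<Rightarrow> nat \<Rightarrow> nat set \<Rightarrow> nat set" where
  "gossip_upd i j S = (if i \<in> S then insert j S else S)"

text \<open>Total rate of all independent Poisson clocks: generation (lambda_e),
source-to-node (n clocks of rate lambda/n), ring gossip (2n clocks of rate lambda/2).\<close>
definition total_rate :: "real \<Rightarrow> real \<Rightarrow> nat \<Rightarrow> real" where
  "total_rate le l n = le + real n * (l / real n) + real n * 2 * (l / 2)"

text \<open>One-event transition probability of the embedded (uniformized) chain: the
next event among all clocks is chosen proportionally to its rate.\<close>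
definition trans_prob :: "real \<Rightarrow> real \<Rightarrow> nat \<Rightarrow> nat set \<Rightarrow> nat set \<Rightarrow> real" where
  "trans_prob le l n S T =
     (le * (if T = {} then 1 else 0)
      + (\<Sum>j<n. (l / real n) * (if T = insert j S then 1 else 0))
      + (\<Sum>j<n. (l / 2) * (if T = gossip_upd j ((j + 1) mod n) S then 1 else 0)
                + (l / 2) * (if T = gossip_upd j ((j + n - 1) mod n) S then 1 else 0)))
     / total_rate le l n"

fun state_dist :: "real \<Rightarrow> real \<Rightarrow> nat \<Rightarrow> nat set \<Rightarrow> nat \<Rightarrow> nat set \<Rightarrow> real" where
  "state_dist le l n S0 0 T = (if T = S0 then 1 else 0)"
| "state_dist le l n S0 (Suc k) T =
     (\<Sum>S\<in>Pow {..<n}. state_dist le l n S0 k S * trans_prob le l n S T)"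

text \<open>E[F_1(t)]: the number of events in [0,t] is Poisson(q t), independent of the
event marks (superposition of the independent Poisson clocks).\<close>
definition expected_freshness :: "real \<Rightarrow> real \<Rightarrow> nat \<Rightarrow> nat set \<Rightarrow> real \<Rightarrow> real" where
  "expected_freshness le l n S0 t =
     (\<Sum>k. exp (- total_rate le l n * t) * (total_rate le l n * t) ^ k / fact k
          * (\<Sum>S\<in>{S\<in>Pow {..<n}. 0 \<in> S}. state_dist le l n S0 k S))"

definition avg_freshness :: "real \<Rightarrow> real \<Rightarrow> nat \<Rightarrow> nat set \<Rightarrow> real" where
  "avg_freshness le l n S0 = Lim at_top (expected_freshness le l n S0)"

end

theory Submission
  imports Defs
begin


definition hA :: "nat set \<Rightarrow> nat set \<Rightarrow> real" where
  "hA A S = (if A \<inter> S \<noteq> {} then 1 else 0)"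

function fp :: "real \<Rightarrow> real \<Rightarrow> nat \<Rightarrow> nat \<Rightarrow> real" where
  "fp le l n m = (if n \<le> m then l / (le + l)
     else (l * real m / real n + l * fp le l n (Suc m)) / (le + l * real m / real n + l))"
  by auto
termination by (relation "Wellfounded.measure (\<lambda>(le, l, n, m). n - m)") auto

declare fp.simps[simp del]

locale net =
  fixes le l :: real and n :: nat and S0 :: "nat set"
  assumes le_pos: "le > 0" and l_pos: "l > 0" and n_pos: "n > 0" and S0_sub: "S0 \<subseteq> {..<n}"
begin

definition q where "q = total_rate le l n"

lemma q_eq: "q = le + l + real n * l"
  using n_pos by (simp add: q_def total_rate_def)

lemma q_pos: "q > 0" using q_eq le_pos l_pos by (simp add: add_pos_nonneg)

abbreviation P where "P k S \<equiv> state_dist le l n S0 k S"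

lemma delta_sum:
  assumes "X \<in> Pow {..<n}"
  shows "(\<Sum>T\<in>Pow {..<n}. (if T = X then 1 else 0) * g T) = (g X :: real)"
proof -
  have "(\<Sum>T\<in>Pow {..<n}. (if T = X then 1 else 0) * g T) = (\<Sum>T\<in>Pow {..<n}. if T = X then g X else 0)"
    by (rule sum.cong) auto
  also have "\<dots> = g X" using assms by simp
  finally show ?thesis .
qed

definition gu1 where "gu1 j S = gossip_upd j ((j + 1) mod n) S"
definition gu2 where "gu2 j S = gossip_upd j ((j + n - 1) mod n) S"

lemma gu_Pow:
  assumes "S \<in> Pow {..<n}" "j < n"
  shows "gu1 j S \<in> Pow {..<n}" "gu2 j S \<in> Pow {..<n}" "insert j S \<in> Pow {..<n}"
  using assms n_pos by (auto simp: gu1_def gu2_def gossip_upd_def)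

lemma trans_sum:
  assumes S: "S \<in> Pow {..<n}"
  shows "(\<Sum>T\<in>Pow {..<n}. trans_prob le l n S T * g T) =
    (le * g {} + (\<Sum>j<n. l / n * g (insert j S))
     + (\<Sum>j<n. l / 2 * g (gu1 j S) + l / 2 * g (gu2 j S))) / q"
proof -
  have "(\<Sum>T\<in>Pow {..<n}. trans_prob le l n S T * g T) =
     (\<Sum>T\<in>Pow {..<n}. (le * ((if T = {} then 1 else 0) * g T)
      + (\<Sum>j<n. (l / real n) * ((if T = insert j S then 1 else 0) * g T))
      + (\<Sum>j<n. (l / 2) * ((if T = gu1 j S then 1 else 0) * g T)
                + (l / 2) * ((if T = gu2 j S then 1 else 0) * g T))) / q)"
    unfolding trans_prob_def q_def gu1_def gu2_def
    by (intro sum.cong refl) (simp add: sum_distrib_right sum_distrib_left sum_divide_distrib algebra_simps)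
  also have "\<dots> = (le * (\<Sum>T\<in>Pow {..<n}. (if T = {} then 1 else 0) * g T)
      + (\<Sum>j<n. (l / real n) * (\<Sum>T\<in>Pow {..<n}. (if T = insert j S then 1 else 0) * g T))
      + (\<Sum>j<n. (l / 2) * (\<Sum>T\<in>Pow {..<n}. (if T = gu1 j S then 1 else 0) * g T)
                + (l / 2) * (\<Sum>T\<in>Pow {..<n}. (if T = gu2 j S then 1 else 0) * g T))) / q"
    by (simp add: sum_divide_distrib[symmetric] sum.distrib sum_distrib_left sum.swap[of _ "Pow {..<n}"])
  also have "\<dots> = (le * g {} + (\<Sum>j<n. l / n * g (insert j S))
     + (\<Sum>j<n. l / 2 * g (gu1 j S) + l / 2 * g (gu2 j S))) / q"
    using S gu_Pow by (simp add: delta_sum)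
  finally show ?thesis .
qed

lemma step_gen:
  "(\<Sum>T\<in>Pow {..<n}. P (Suc k) T * g T) = (\<Sum>S\<in>Pow {..<n}. P k S *
    ((le * g {} + (\<Sum>j<n. l / n * g (insert j S))
     + (\<Sum>j<n. l / 2 * g (gu1 j S) + l / 2 * g (gu2 j S))) / q))"
proof -
  have "(\<Sum>T\<in>Pow {..<n}. P (Suc k) T * g T) =
     (\<Sum>T\<in>Pow {..<n}. \<Sum>S\<in>Pow {..<n}. P k S * (trans_prob le l n S T * g T))"
    by (simp add: sum_distrib_right mult.assoc)
  also have "\<dots> = (\<Sum>S\<in>Pow {..<n}. P k S * (\<Sum>T\<in>Pow {..<n}. trans_prob le l n S T * g T))"
    by (subst sum.swap) (simp add: sum_distrib_left)
  also have "\<dots> = (\<Sum>S\<in>Pow {..<n}. P k S *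
    ((le * g {} + (\<Sum>j<n. l / n * g (insert j S))
     + (\<Sum>j<n. l / 2 * g (gu1 j S) + l / 2 * g (gu2 j S))) / q))"
    by (intro sum.cong refl) (simp add: trans_sum)
  finally show ?thesis .
qed

lemma mass: "(\<Sum>S\<in>Pow {..<n}. P k S) = 1"
proof (induction k)
  case 0
  then show ?case using S0_sub by (simp add: sum.delta)
next
  case (Suc k)
  have "(\<Sum>S\<in>Pow {..<n}. P (Suc k) S) = (\<Sum>T\<in>Pow {..<n}. P (Suc k) T * 1)" by simp
  also have "\<dots> = (\<Sum>S\<in>Pow {..<n}. P k S * ((le + real n * (l / n) + real n * l) / q))"
    by (subst step_gen) simp
  also have "(le + real n * (l / n) + real n * l) / q = 1"
    using q_eq q_pos n_pos by simp
  finally show ?case using Suc by simp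
qed

definition a where "a k A = (\<Sum>S\<in>Pow {..<n}. P k S * hA A S)"

lemma hA_insert: "hA A (insert j S) = (if j \<in> A then 1 else hA A S)"
  by (auto simp: hA_def)

lemma hA_gossip: "hA A (gossip_upd i j S) = hA (if j \<in> A then insert i A else A) S"
  by (auto simp: hA_def gossip_upd_def)

lemma a_Suc: "a (Suc k) A = ((\<Sum>j<n. l / n * (if j \<in> A then 1 else a k A))
   + (\<Sum>j<n. l / 2 * a k (if (j + 1) mod n \<in> A then insert j A else A)
            + l / 2 * a k (if (j + n - 1) mod n \<in> A then insert j A else A))) / q"
proof -
  have e1: "(\<Sum>S\<in>Pow {..<n}. P k S * hA A (insert j S)) = (if j \<in> A then 1 else a k A)" for j
    by (simp add: hA_insert mass a_def)
  have e2: "(\<Sum>S\<in>Pow {..<n}. P k S * hA A (gossip_upd i j S)) = a k (if j \<in> A then insert i A else A)" for i j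
    by (simp add: hA_gossip a_def)
  have "a (Suc k) A = (\<Sum>S\<in>Pow {..<n}. P k S *
    ((le * hA A {} + (\<Sum>j<n. l / n * hA A (insert j S))
     + (\<Sum>j<n. l / 2 * hA A (gu1 j S) + l / 2 * hA A (gu2 j S))) / q))"
    unfolding a_def by (rule step_gen)
  also have "\<dots> = ((\<Sum>j<n. l / n * (\<Sum>S\<in>Pow {..<n}. P k S * hA A (insert j S)))
     + (\<Sum>j<n. l / 2 * (\<Sum>S\<in>Pow {..<n}. P k S * hA A (gu1 j S))
             + l / 2 * (\<Sum>S\<in>Pow {..<n}. P k S * hA A (gu2 j S)))) / q"
    by (simp add: hA_def[of A "{}"] sum_divide_distrib[symmetric] sum_distrib_left sum_distrib_right
        sum.distrib sum.swap[of _ "Pow {..<n}" "{..<n}"] algebra_simps)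
  also have "\<dots> = ((\<Sum>j<n. l / n * (if j \<in> A then 1 else a k A))
   + (\<Sum>j<n. l / 2 * a k (if (j + 1) mod n \<in> A then insert j A else A)
            + l / 2 * a k (if (j + n - 1) mod n \<in> A then insert j A else A))) / q"
    by (simp only: e1 e2 gu1_def gu2_def)
  finally show ?thesis .
qed

definition arc where "arc s m = (\<lambda>i. (s + i) mod n) ` {..<m}"

lemma mod_cancel: "(s + t) mod n = (s + i) mod n \<Longrightarrow> t mod n = i mod (n::nat)"
  by (simp add: nat_mod_eq_iff)

lemma mem_arc: "m \<le> n \<Longrightarrow> (s + t) mod n \<in> arc s m \<longleftrightarrow> t mod n < m"
proof
  assume m: "m \<le> n" and "(s + t) mod n \<in> arc s m"
  then obtain i where i: "i < m" and eq: "(s + t) mod n = (s + i) mod n" by (auto simp: arc_def)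
  from eq have "t mod n = i mod n" by (rule mod_cancel)
  with i m show "t mod n < m" by simp
next
  assume "t mod n < m"
  then show "(s + t) mod n \<in> arc s m" unfolding arc_def
    by (intro image_eqI[of _ _ "t mod n"]) (auto simp: mod_add_right_eq)
qed

lemma mem_arc': "m \<le> n \<Longrightarrow> i < n \<Longrightarrow> (s + i) mod n \<in> arc s m \<longleftrightarrow> i < m"
  using mem_arc[of m s i] by simp

lemma reindex: "(\<Sum>j<n. G j) = (\<Sum>i<n. G ((s + i) mod n))"
proof -
  have inj: "inj_on (\<lambda>i. (s + i) mod n) {..<n}"
    by (auto simp: inj_on_def dest: mod_cancel)
  have img: "(\<lambda>i. (s + i) mod n) ` {..<n} = {..<n}"
    by (rule endo_inj_surj) (auto simp: n_pos inj)
  have "(\<Sum>j<n. G j) = sum G ((\<lambda>i. (s + i) mod n) ` {..<n})" by (simp add: img)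
  also have "\<dots> = (\<Sum>i<n. G ((s + i) mod n))" by (simp add: sum.reindex[OF inj])
  finally show ?thesis .
qed

lemma sum_single: "i0 < n \<Longrightarrow> (\<Sum>i<n. if i = i0 then X else Y) = (real n - 1) * Y + (X::real)"
proof -
  assume i0: "i0 < n"
  have "(\<Sum>i<n. if i = i0 then X else Y) = (\<Sum>i<n. Y + (if i = i0 then X - Y else 0))"
    by (rule sum.cong) auto
  also have "\<dots> = real n * Y + (X - Y)" using i0 by (simp add: sum.distrib)
  finally show ?thesis by (simp add: algebra_simps)
qed

lemma arc_insert_left: "insert ((s + (n - 1)) mod n) (arc s m) = arc (s + n - 1) (m + 1)"
proof -
  have "(\<lambda>i. (s + n - 1 + Suc i) mod n) ` {..<m} = (\<lambda>i. (s + i) mod n) ` {..<m}"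
  proof (rule image_cong[OF refl])
    fix i have "s + n - 1 + Suc i = (s + i) + n" using n_pos by simp
    then show "(s + n - 1 + Suc i) mod n = (s + i) mod n" by (simp only: mod_add_self2)
  qed
  moreover have "s + n - 1 = s + (n - 1)" using n_pos by simp
  ultimately show ?thesis
    unfolding arc_def by (simp add: lessThan_Suc_eq_insert_0 image_image del: image_Suc_lessThan)
qed

lemma arc_insert_right: "insert ((s + m) mod n) (arc s m) = arc s (m + 1)"
  by (simp add: arc_def lessThan_Suc)

lemma edge1:
  assumes m: "m \<le> n" and m1: "1 \<le> m"
  shows "(\<Sum>j<n. F (if (j + 1) mod n \<in> arc s m then insert j (arc s m) else arc s m))
    = (real n - 1) * F (arc s m) + (F (if m < n then arc (s + n - 1) (m + 1) else arc s m) :: real)"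
proof -
  let ?A = "arc s m"
  have "(\<Sum>j<n. F (if (j + 1) mod n \<in> ?A then insert j ?A else ?A))
    = (\<Sum>i<n. F (if ((s + i) mod n + 1) mod n \<in> ?A then insert ((s + i) mod n) ?A else ?A))"
    by (rule reindex)
  also have "\<dots> = (\<Sum>i<n. if i = n - 1 then F (if m < n then arc (s + n - 1) (m + 1) else ?A) else F ?A)"
  proof (rule sum.cong[OF refl])
    fix i assume i: "i \<in> {..<n}"
    have e: "((s + i) mod n + 1) mod n = (s + (i + 1)) mod n" by (simp add: mod_Suc_eq)
    have mi: "(s + i) mod n \<in> ?A \<longleftrightarrow> i < m" using mem_arc'[OF m] i by simp
    have mi1: "(s + (i + 1)) mod n \<in> ?A \<longleftrightarrow> (i + 1) mod n < m" using mem_arc[OF m, of s "i + 1"] by simp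
    show "F (if ((s + i) mod n + 1) mod n \<in> ?A then insert ((s + i) mod n) ?A else ?A)
       = (if i = n - 1 then F (if m < n then arc (s + n - 1) (m + 1) else ?A) else F ?A)"
    proof (cases "i = n - 1")
      case True
      then have "(i + 1) mod n = 0" using n_pos by simp
      moreover have "(s + i) mod n = (s + (n - 1)) mod n" using True by simp
      ultimately show ?thesis using e mi mi1 m m1 True n_pos arc_insert_left[of s m]
        by (auto simp: insert_absorb)
    next
      case False
      then have "(i + 1) mod n = i + 1" using i by simp
      then show ?thesis using e mi mi1 False by (auto simp: insert_absorb)
    qed
  qed
  also have "\<dots> = (real n - 1) * F ?A + F (if m < n then arc (s + n - 1) (m + 1) else ?A)"
    using n_pos by (intro sum_single) simp
  finally show ?thesis .
qed

lemma edge2: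
  assumes m: "m \<le> n" "1 \<le> m"
  shows "(\<Sum>j<n. F (if (j + n - 1) mod n \<in> arc s m then insert j (arc s m) else arc s m))
    = (real n - 1) * F (arc s m) + (F (if m < n then arc s (m + 1) else arc s m) :: real)"
proof -
  let ?A = "arc s m"
  let ?i0 = "if m < n then m else 0"
  have "(\<Sum>j<n. F (if (j + n - 1) mod n \<in> ?A then insert j ?A else ?A))
    = (\<Sum>i<n. F (if ((s + i) mod n + n - 1) mod n \<in> ?A then insert ((s + i) mod n) ?A else ?A))"
    by (rule reindex)
  also have "\<dots> = (\<Sum>i<n. if i = ?i0 then F (if m < n then arc s (m + 1) else ?A) else F ?A)"
  proof (rule sum.cong[OF refl])
    fix i assume i: "i \<in> {..<n}"
    have e: "((s + i) mod n + n - 1) mod n = (s + (i + (n - 1))) mod n"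
    proof -
      have "(s + i) mod n + n - 1 = (s + i) mod n + (n - 1)" using n_pos by simp
      then show ?thesis by (simp add: mod_add_left_eq add.assoc)
    qed
    have mi: "(s + i) mod n \<in> ?A \<longleftrightarrow> i < m" using mem_arc'[OF m(1)] i by simp
    have mi1: "(s + (i + (n - 1))) mod n \<in> ?A \<longleftrightarrow> (i + (n - 1)) mod n < m" using mem_arc[OF m(1), of s "i + (n - 1)"] by simp
    show "F (if ((s + i) mod n + n - 1) mod n \<in> ?A then insert ((s + i) mod n) ?A else ?A)
       = (if i = ?i0 then F (if m < n then arc s (m + 1) else ?A) else F ?A)"
    proof (cases "m < n")
      case False
      then show ?thesis using mi i m by (auto simp: insert_absorb)
    next
      case mn: True
      show ?thesis
      proof (cases "i = 0")
        case True
        then have "(i + (n - 1)) mod n = n - 1" using n_pos by simp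
        then show ?thesis using e mi1 mn True m by auto
      next
        case False
        then have "i + (n - 1) = (i - 1) + n" using n_pos by simp
        then have "(i + (n - 1)) mod n = (i - 1) mod n" by (simp only: mod_add_self2)
        also have "\<dots> = i - 1" using i by simp
        finally have im: "(i + (n - 1)) mod n = i - 1" .
        have recv: "((s + i) mod n + n - 1) mod n \<in> ?A \<longleftrightarrow> i - 1 < m"
          unfolding e mi1 im ..
        show ?thesis
        proof (cases "i = m")
          case True
          have "((s + i) mod n + n - 1) mod n \<in> ?A" using recv True m(2) False by simp
          moreover have "insert ((s + i) mod n) ?A = arc s (m + 1)" using True arc_insert_right[of s m] by simp
          ultimately show ?thesis using True mn by simp
        next
          case ne: False
          show ?thesis
          proof (cases "i < m")
            case True
            then have "(s + i) mod n \<in> ?A" using mi by simp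
            then show ?thesis using ne mn by (simp add: insert_absorb)
          next
            case ge: False
            then have "((s + i) mod n + n - 1) mod n \<notin> ?A" using recv ne by simp
            then show ?thesis using ne mn by simp
          qed
        qed
      qed
    qed
  qed
  also have "\<dots> = (real n - 1) * F ?A + F (if m < n then arc s (m + 1) else ?A)"
    using n_pos by (intro sum_single) simp
  finally show ?thesis .
qed

abbreviation f where "f m \<equiv> fp le l n m"

lemma f_bounds_aux: "\<forall>m. n - m = d \<longrightarrow> 0 \<le> f m \<and> f m \<le> 1"
proof (induction d)
  case 0
  then show ?case using le_pos l_pos by (auto simp: fp.simps)
next
  case (Suc d)
  show ?case
  proof (intro allI impI)
    fix m assume md: "n - m = Suc d"
    then have mn: "m < n" by simp
    have ih: "0 \<le> f (Suc m) \<and> f (Suc m) \<le> 1" using Suc md by simp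
    have c: "le + l * real m / real n + l > 0" using le_pos l_pos by (simp add: add_pos_nonneg)
    have fm: "f m = (l * real m / real n + l * f (Suc m)) / (le + l * real m / real n + l)"
      using mn by (simp add: fp.simps)
    have "0 \<le> l * real m / real n + l * f (Suc m)" using ih l_pos by simp
    moreover have "l * f (Suc m) \<le> l" using ih l_pos by (simp add: mult_left_le)
    then have "l * real m / real n + l * f (Suc m) \<le> le + l * real m / real n + l"
      using le_pos by linarith
    ultimately show "0 \<le> f m \<and> f m \<le> 1" unfolding fm using c by simp
  qed
qed

lemma f_bounds: "0 \<le> f m" "f m \<le> 1" using f_bounds_aux by auto

lemma f_eq:
  assumes "1 \<le> m" "m \<le> n"
  shows "q * f m = l * real m / real n + (l * (real n - real m) / real n + l * (real n - 1)) * f m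
     + l * f (if m < n then m + 1 else m)"
proof (cases "m < n")
  case True
  have c: "le + l * real m / real n + l > 0" using le_pos l_pos by (simp add: add_pos_nonneg)
  have fm: "f m * (le + l * real m / real n + l) = l * real m / real n + l * f (Suc m)"
    using True c by (simp add: fp.simps[of le l n m])
  show ?thesis using True fm n_pos unfolding q_eq by (simp add: field_simps)
next
  case False
  then have "m = n" using assms by simp
  moreover have "f n = l / (le + l)" by (simp add: fp.simps)
  ultimately show ?thesis using n_pos le_pos l_pos unfolding q_eq by (simp add: field_simps)
qed

lemma src_sum:
  assumes "m \<le> n"
  shows "(\<Sum>j<n. l / n * (if j \<in> arc s m then 1 else x)) = l * real m / real n + l * (real n - real m) / real n * x"
proof -
  have "(\<Sum>j<n. l / n * (if j \<in> arc s m then 1 else x)) = (\<Sum>i<n. l / n * (if (s + i) mod n \<in> arc s m then 1 else x))"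
    by (rule reindex)
  also have "\<dots> = (\<Sum>i<n. if i < m then l / n else l / n * x)"
    using mem_arc'[OF assms] by (intro sum.cong) auto
  also have "\<dots> = (\<Sum>i\<in>{..<m}. l / n) + (\<Sum>i\<in>{m..<n}. l / n * x)"
  proof -
    have "{..<n} \<inter> {i. i < m} = {..<m}" "{..<n} \<inter> - {i. i < m} = {m..<n}" using assms by auto
    then show ?thesis by (simp add: sum.If_cases)
  qed
  also have "\<dots> = l * real m / real n + l * (real n - real m) / real n * x"
    using assms by (simp add: of_nat_diff algebra_simps)
  finally show ?thesis .
qed

lemma arc_rec:
  assumes m: "1 \<le> m" "m \<le> n"
  shows "q * a (Suc k) (arc s m) = l * real m / real n + l * (real n - real m) / real n * a k (arc s m)
     + l * (real n - 1) * a k (arc s m)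
     + l / 2 * a k (if m < n then arc (s + n - 1) (m + 1) else arc s m)
     + l / 2 * a k (if m < n then arc s (m + 1) else arc s m)"
proof -
  have "q * a (Suc k) (arc s m) = (\<Sum>j<n. l / n * (if j \<in> arc s m then 1 else a k (arc s m)))
   + (l / 2 * (\<Sum>j<n. a k (if (j + 1) mod n \<in> arc s m then insert j (arc s m) else arc s m))
    + l / 2 * (\<Sum>j<n. a k (if (j + n - 1) mod n \<in> arc s m then insert j (arc s m) else arc s m)))"
    using q_pos by (simp add: a_Suc sum.distrib sum_distrib_left)
  also have "\<dots> = l * real m / real n + l * (real n - real m) / real n * a k (arc s m)
   + (l / 2 * ((real n - 1) * a k (arc s m) + a k (if m < n then arc (s + n - 1) (m + 1) else arc s m))
    + l / 2 * ((real n - 1) * a k (arc s m) + a k (if m < n then arc s (m + 1) else arc s m)))"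
    by (simp only: src_sum[OF m(2)] edge1[OF m(2) m(1)] edge2[OF m(2) m(1)])
  finally show ?thesis by (simp add: algebra_simps)
qed

definition r where "r = (q - le) / q"

lemma contraction: "\<forall>s m. 1 \<le> m \<longrightarrow> m \<le> n \<longrightarrow> \<bar>a k (arc s m) - f m\<bar> \<le> r ^ k"
proof (induction k)
  case 0
  show ?case
  proof (intro allI impI)
    fix s m assume "1 \<le> m" "m \<le> n"
    have "a 0 (arc s m) = hA (arc s m) S0"
      unfolding a_def using S0_sub by (simp add: delta_sum)
    then show "\<bar>a 0 (arc s m) - f m\<bar> \<le> r ^ 0" using f_bounds[of m] by (simp add: hA_def)
  qed
next
  case (Suc k)
  show ?case
  proof (intro allI impI)
    fix s m assume m: "1 \<le> m" "m \<le> n"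
    define A where "A = arc s m"
    define B1 where "B1 = (if m < n then arc (s + n - 1) (m + 1) else arc s m)"
    define B2 where "B2 = (if m < n then arc s (m + 1) else arc s m)"
    define f' where "f' = f (if m < n then m + 1 else m)"
    have D: "\<bar>a k A - f m\<bar> \<le> r ^ k" using Suc m unfolding A_def by blast
    have E1: "\<bar>a k B1 - f'\<bar> \<le> r ^ k" using Suc m unfolding B1_def f'_def by (cases "m < n") auto
    have E2: "\<bar>a k B2 - f'\<bar> \<le> r ^ k" using Suc m unfolding B2_def f'_def by (cases "m < n") auto
    define \<alpha> where "\<alpha> = l * (real n - real m) / real n + l * (real n - 1)"
    have \<alpha>0: "\<alpha> \<ge> 0" unfolding \<alpha>_def using m n_pos l_pos by simp
    have \<alpha>1: "\<alpha> + l \<le> q - le" unfolding \<alpha>_def q_eq using m n_pos l_pos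
      by (simp add: field_simps)
    have key: "q * (a (Suc k) A - f m) = \<alpha> * (a k A - f m) + l / 2 * (a k B1 - f') + l / 2 * (a k B2 - f')"
      using arc_rec[OF m, of k s] f_eq[OF m] unfolding A_def B1_def B2_def f'_def \<alpha>_def
      by (simp add: algebra_simps)
    have "\<bar>q * (a (Suc k) A - f m)\<bar> \<le> \<alpha> * \<bar>a k A - f m\<bar> + l / 2 * \<bar>a k B1 - f'\<bar> + l / 2 * \<bar>a k B2 - f'\<bar>"
    proof -
      have t: "\<bar>X + Y + Z\<bar> \<le> \<bar>X\<bar> + \<bar>Y\<bar> + \<bar>Z\<bar>" for X Y Z :: real by arith
      show ?thesis unfolding key using t[of "\<alpha> * (a k A - f m)" "l / 2 * (a k B1 - f')" "l / 2 * (a k B2 - f')"]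
        \<alpha>0 l_pos by (simp add: abs_mult)
    qed
    also have "\<dots> \<le> \<alpha> * r ^ k + l / 2 * r ^ k + l / 2 * r ^ k"
      using D E1 E2 \<alpha>0 l_pos by (intro add_mono mult_left_mono) auto
    also have "\<dots> \<le> (q - le) * r ^ k"
    proof -
      have "r ^ k \<ge> 0" unfolding r_def using q_eq le_pos l_pos n_pos by simp
      then have "(\<alpha> + l) * r ^ k \<le> (q - le) * r ^ k" by (rule mult_right_mono[OF \<alpha>1])
      then show ?thesis by (simp add: distrib_right)
    qed
    finally have "q * \<bar>a (Suc k) A - f m\<bar> \<le> q * (r * r ^ k)"
      using q_pos unfolding r_def by (simp add: abs_mult)
    then show "\<bar>a (Suc k) (arc s m) - f m\<bar> \<le> r ^ Suc k"
      using q_pos unfolding A_def by simp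
  qed
qed

lemma exp_sums: "(\<lambda>k. y ^ k / fact k) sums exp (y::real)"
  using exp_converges[of y] by (simp add: divide_inverse mult.commute)

lemma inner_eq: "(\<Sum>S\<in>{S\<in>Pow {..<n}. 0 \<in> S}. P k S) = a k (arc 0 1)"
proof -
  have "arc 0 1 = {0}" by (auto simp: arc_def)
  then have "a k (arc 0 1) = (\<Sum>S\<in>Pow {..<n}. if 0 \<in> S then P k S else 0)"
    unfolding a_def hA_def by (intro sum.cong) auto
  also have "\<dots> = (\<Sum>S\<in>{S\<in>Pow {..<n}. 0 \<in> S}. P k S)"
    by (rule sum.inter_filter[symmetric]) simp
  finally show ?thesis by simp
qed

lemma EF_bound:
  assumes t: "t \<ge> 0"
  shows "\<bar>expected_freshness le l n S0 t - f 1\<bar> \<le> exp (- le * t)"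
proof -
  define x where "x = q * t"
  have x0: "x \<ge> 0" using t q_pos unfolding x_def by simp
  define w where "w k = exp (- x) * x ^ k / fact k" for k
  define b where "b k = a k (arc 0 1)" for k
  define d where "d k = b k - f 1" for k
  have w0: "w k \<ge> 0" for k unfolding w_def using x0 by simp
  have r0: "r \<ge> 0" unfolding r_def using q_eq le_pos l_pos n_pos by simp
  have dk: "\<bar>d k\<bar> \<le> r ^ k" for k unfolding d_def b_def using contraction[of k] n_pos by simp
  have EF: "expected_freshness le l n S0 t = (\<Sum>k. w k * b k)"
    unfolding expected_freshness_def w_def b_def x_def q_def[symmetric] inner_eq by simp
  have ws: "w sums 1"
  proof -
    have "(\<lambda>k. exp (- x) * (x ^ k / fact k)) sums (exp (- x) * exp x)"
      by (rule sums_mult[OF exp_sums])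
    then show ?thesis unfolding w_def by (simp add: exp_minus field_simps)
  qed
  have wrs: "(\<lambda>k. w k * r ^ k) sums exp (- le * t)"
  proof -
    have "(\<lambda>k. exp (- x) * ((x * r) ^ k / fact k)) sums (exp (- x) * exp (x * r))"
      by (rule sums_mult[OF exp_sums])
    moreover have "exp (- x) * exp (x * r) = exp (- le * t)"
    proof -
      have "- x + x * r = - le * t" unfolding x_def r_def using q_pos by (simp add: field_simps)
      then show ?thesis by (simp add: exp_add[symmetric])
    qed
    ultimately show ?thesis unfolding w_def by (simp add: power_mult_distrib field_simps)
  qed
  have sd: "summable (\<lambda>k. \<bar>w k * d k\<bar>)"
    by (rule summable_comparison_test[OF _ sums_summable[OF wrs]])
       (auto intro!: exI[of _ 0] simp: abs_mult w0 mult_left_mono dk)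
  have sd': "summable (\<lambda>k. w k * d k)" using sd by (rule summable_rabs_cancel)
  have "(\<lambda>k. w k * b k) = (\<lambda>k. w k * f 1 + w k * d k)" unfolding d_def by (simp add: algebra_simps)
  then have "(\<Sum>k. w k * b k) = (\<Sum>k. w k * f 1) + (\<Sum>k. w k * d k)"
    using suminf_add[OF summable_mult2[OF sums_summable[OF ws]] sd'] by simp
  also have "(\<Sum>k. w k * f 1) = f 1" using sums_unique[OF sums_mult2[OF ws, of "f 1"]] by simp
  finally have e: "expected_freshness le l n S0 t - f 1 = (\<Sum>k. w k * d k)" using EF by simp
  have "\<bar>\<Sum>k. w k * d k\<bar> \<le> (\<Sum>k. \<bar>w k * d k\<bar>)" by (rule summable_rabs[OF sd])
  also have "\<dots> \<le> (\<Sum>k. w k * r ^ k)"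
    by (rule suminf_le[OF _ sd sums_summable[OF wrs]]) (simp add: abs_mult w0 mult_left_mono dk)
  also have "\<dots> = exp (- le * t)" using sums_unique[OF wrs] by simp
  finally show ?thesis using e by simp
qed

lemma EF_limit: "(expected_freshness le l n S0 \<longlongrightarrow> f 1) at_top"
proof -
  have "((\<lambda>t. expected_freshness le l n S0 t - f 1) \<longlongrightarrow> 0) at_top"
  proof (rule Lim_null_comparison)
    show "eventually (\<lambda>t. norm (expected_freshness le l n S0 t - f 1) \<le> exp (- le * t)) at_top"
      using EF_bound by (auto intro!: eventually_ge_at_top[of 0, THEN eventually_mono])
    have "LIM t at_top. (- le) * t :> at_bot"
      by (rule filterlim_tendsto_neg_mult_at_bot[OF tendsto_const _ filterlim_ident]) (use le_pos in simp)
    then show "((\<lambda>t. exp (- le * t)) \<longlongrightarrow> 0) at_top"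
      by (rule filterlim_compose[OF exp_at_bot])
  qed
  then have "((\<lambda>t. (expected_freshness le l n S0 t - f 1) + f 1) \<longlongrightarrow> 0 + f 1) at_top"
    by (intro tendsto_add) auto
  then show ?thesis by simp
qed

end


locale asy =
  fixes le l :: real
  assumes le_pos: "le > 0" and l_pos: "l > 0"
begin

definition x where "x = l / (le + l)"
definition AA where "AA = l / le"
definition BB where "BB = l^2 / le^2"
definition v where "v (m::nat) = AA * real m + BB"
definition \<alpha> where "\<alpha> = x * AA / (1 - x)"
definition \<beta> where "\<beta> = (x * BB + 2 * x * \<alpha>) / (1 - x)"
definition \<gamma> where "\<gamma> = x * (\<alpha> + \<beta>) / (1 - x)"
definition Q where "Q (m::nat) = \<alpha> * real m ^ 2 + \<beta> * real m + \<gamma>"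

lemma x_pos: "x > 0" and x_lt1: "x < 1" and y_eq: "1 - x = le / (le + l)"
  using le_pos l_pos by (auto simp: x_def field_simps)

lemma AA_pos: "AA > 0" and BB_pos: "BB > 0" using le_pos l_pos by (auto simp: AA_def BB_def)

lemma coef_nonneg: "\<alpha> \<ge> 0" "\<beta> \<ge> 0" "\<gamma> \<ge> 0"
  using x_pos x_lt1 AA_pos BB_pos by (auto simp: \<alpha>_def \<beta>_def \<gamma>_def)

lemma Q_nonneg: "Q m \<ge> 0" using coef_nonneg by (simp add: Q_def)

lemma Q_rec: "Q m = x * Q (Suc m) + x * real m * v m"
proof -
  have y: "1 - x \<noteq> 0" using x_lt1 by simp
  have a: "(1 - x) * \<alpha> = x * AA" unfolding \<alpha>_def using y by simp
  have b: "(1 - x) * \<beta> = x * BB + 2 * x * \<alpha>" unfolding \<beta>_def using y by simp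
  have c: "(1 - x) * \<gamma> = x * (\<alpha> + \<beta>)" unfolding \<gamma>_def using y by simp
  show ?thesis unfolding Q_def v_def of_nat_Suc using a b c by algebra
qed

lemma v_nonneg: "v m \<ge> 0" using AA_pos BB_pos by (simp add: v_def)

lemma v_rec: "(le + l) * v m = l * real m + l * v (Suc m)"
  unfolding v_def AA_def BB_def using le_pos by (simp add: field_simps power2_eq_square)

context
  fixes n :: nat
  assumes n_pos: "n > 0"
begin

definition e where "e m = real n * fp le l n m - v m"

lemma e_step:
  assumes mn: "m < n"
  shows "\<bar>e m\<bar> \<le> x * \<bar>e (Suc m)\<bar> + x * (real m * v m / real n)"
proof -
  define c where "c = le + l * real m / real n + l"
  have c0: "c \<ge> le + l" unfolding c_def using l_pos by simp
  have cpos: "c > 0" using c0 le_pos l_pos by simp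
  have fm: "fp le l n m * c = l * real m / real n + l * fp le l n (Suc m)"
    using mn cpos unfolding c_def by (simp add: fp.simps[of le l n m])
  have ce: "c * e m = l * e (Suc m) - l * (real m / real n) * v m"
  proof -
    have "c * v m = l * real m + l * v (Suc m) + l * (real m / real n) * v m"
      using v_rec[of m] unfolding c_def by (simp add: algebra_simps)
    moreover have "c * (real n * fp le l n m) = l * real m + l * (real n * fp le l n (Suc m))"
      using fm n_pos by (simp add: field_simps)
    ultimately show ?thesis unfolding e_def by (simp add: algebra_simps)
  qed
  have em: "e m = (l / c) * e (Suc m) - (l / c) * (real m / real n * v m)"
    using ce cpos by (simp add: field_simps)
  have lc: "l / c \<le> x" unfolding x_def using c0 l_pos le_pos
    by (simp add: frac_le)
  have lc0: "l / c \<ge> 0" using l_pos cpos by simp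
  have nn: "real m / real n * v m \<ge> 0" using v_nonneg by simp
  have "\<bar>e m\<bar> \<le> (l / c) * \<bar>e (Suc m)\<bar> + (l / c) * (real m / real n * v m)"
  proof -
    have "\<bar>(l / c) * e (Suc m) - (l / c) * (real m / real n * v m)\<bar>
        \<le> \<bar>(l / c) * e (Suc m)\<bar> + \<bar>(l / c) * (real m / real n * v m)\<bar>" by (rule abs_triangle_ineq4)
    also have "\<bar>(l / c) * e (Suc m)\<bar> = (l / c) * \<bar>e (Suc m)\<bar>"
      by (simp only: abs_mult abs_of_nonneg[OF lc0])
    also have "\<bar>(l / c) * (real m / real n * v m)\<bar> = (l / c) * (real m / real n * v m)"
      by (rule abs_of_nonneg) (rule mult_nonneg_nonneg[OF lc0 nn])
    finally show ?thesis unfolding em .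
  qed
  also have "\<dots> \<le> x * \<bar>e (Suc m)\<bar> + x * (real m / real n * v m)"
    using lc nn by (intro add_mono mult_right_mono) auto
  finally show ?thesis by simp
qed

lemma e_bound: "m \<le> n \<Longrightarrow> \<bar>e m\<bar> \<le> Q m / real n + x ^ (n - m) * \<bar>e n\<bar>"
proof (induction m rule: inc_induct)
  case base
  then show ?case using Q_nonneg[of n] n_pos by simp
next
  case (step m)
  have "\<bar>e m\<bar> \<le> x * \<bar>e (Suc m)\<bar> + x * (real m * v m / real n)" using e_step[OF step(2)] by simp
  also have "\<dots> \<le> x * (Q (Suc m) / real n + x ^ (n - Suc m) * \<bar>e n\<bar>) + x * (real m * v m / real n)"
    using step(3) x_pos by (intro add_mono mult_left_mono) auto
  also have "\<dots> = (x * Q (Suc m) + x * real m * v m) / real n + x * x ^ (n - Suc m) * \<bar>e n\<bar>"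
    by (simp add: algebra_simps add_divide_distrib)
  also have "x * x ^ (n - Suc m) = x ^ (n - m)" using step(2)
    by (metis Suc_diff_Suc power_Suc)
  finally show ?case using Q_rec[of m] by simp
qed

lemma main_bound: "\<bar>real n * fp le l n 1 - (AA + BB)\<bar> \<le> Q 1 / real n + x ^ (n - 1) * (real n * (x + AA) + BB)"
proof -
  have "\<bar>e 1\<bar> \<le> Q 1 / real n + x ^ (n - 1) * \<bar>e n\<bar>" using e_bound[of 1] n_pos by simp
  moreover have "\<bar>e n\<bar> \<le> real n * (x + AA) + BB"
  proof -
    have "fp le l n n = x" by (simp add: fp.simps x_def)
    then have "e n = real n * x - AA * real n - BB" unfolding e_def v_def by simp
    moreover have "real n * x \<ge> 0" "real n * AA \<ge> 0" using x_pos AA_pos by auto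
    ultimately show ?thesis using BB_pos by (simp add: abs_le_iff algebra_simps)
  qed
  moreover have "x ^ (n - 1) \<ge> 0" using x_pos by simp
  ultimately have "\<bar>e 1\<bar> \<le> Q 1 / real n + x ^ (n - 1) * (real n * (x + AA) + BB)"
    using mult_left_mono[of "\<bar>e n\<bar>" "real n * (x + AA) + BB" "x ^ (n - 1)"] by linarith
  moreover have "e 1 = real n * fp le l n 1 - (AA + BB)" unfolding e_def v_def by simp
  ultimately show ?thesis by simp
qed

end

lemma limit: "(\<lambda>n. real n * fp le l n 1) \<longlonglongrightarrow> AA + BB"
proof -
  define g where "g n = Q 1 * inverse (real n) + ((x + AA) / x) * (real n * x ^ n) + (BB / x) * x ^ n" for n
  have g0: "g \<longlonglongrightarrow> Q 1 * 0 + ((x + AA) / x) * 0 + (BB / x) * 0"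
    unfolding g_def using x_pos x_lt1
    by (intro tendsto_add tendsto_mult tendsto_const lim_inverse_n powser_times_n_limit_0 LIMSEQ_power_zero) auto
  have "(\<lambda>n. real n * fp le l n 1 - (AA + BB)) \<longlonglongrightarrow> 0"
  proof (rule Lim_null_comparison)
    show "eventually (\<lambda>n. norm (real n * fp le l n 1 - (AA + BB)) \<le> g n) sequentially"
    proof (rule eventually_sequentiallyI[of 1])
      fix n :: nat assume n: "1 \<le> n"
      obtain k where k: "n = Suc k" using n by (cases n) auto
      have "x ^ (n - 1) = x ^ n / x" using x_pos unfolding k by simp
      then have "Q 1 / real n + x ^ (n - 1) * (real n * (x + AA) + BB) = g n"
        unfolding g_def using x_pos by (simp add: field_simps)
      then show "norm (real n * fp le l n 1 - (AA + BB)) \<le> g n"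
        using main_bound[of n] n by simp
    qed
    show "g \<longlonglongrightarrow> 0" using g0 by simp
  qed
  then have "(\<lambda>n. (real n * fp le l n 1 - (AA + BB)) + (AA + BB)) \<longlonglongrightarrow> 0 + (AA + BB)"
    by (intro tendsto_add) auto
  then show ?thesis by simp
qed

end

theorem theorem3:
  fixes le l :: real and S0 :: "nat \<Rightarrow> nat set"
  assumes "le > 0" and "l > 0"
    and "\<And>n. S0 n \<subseteq> {..<n}"
  shows "(\<forall>n. \<exists>L. (expected_freshness le l n (S0 n) \<longlongrightarrow> L) at_top)
       \<and> (\<lambda>n. avg_freshness le l n (S0 n)) \<longlonglongrightarrow> 0
       \<and> (\<lambda>n. real n * avg_freshness le l n (S0 n))
            \<longlonglongrightarrow> 1 / (le / l) + 1 / (le / l) ^ 2"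
proof -
  interpret asy le l using assms by unfold_locales
  have EFn: "(expected_freshness le l n (S0 n) \<longlongrightarrow> fp le l n 1) at_top" if n: "n > 0" for n
  proof -
    interpret N: net le l n "S0 n" using assms n by unfold_locales auto
    show ?thesis by (rule N.EF_limit)
  qed
  have c1: "\<forall>n. \<exists>L. (expected_freshness le l n (S0 n) \<longlongrightarrow> L) at_top"
  proof
    fix n :: nat
    show "\<exists>L. (expected_freshness le l n (S0 n) \<longlongrightarrow> L) at_top"
    proof (cases "n = 0")
      case True
      then have e: "{S \<in> Pow {..<n}. 0 \<in> S} = {}" by auto
      have "expected_freshness le l n (S0 n) = (\<lambda>t. 0)"
        unfolding expected_freshness_def e by simp
      then show ?thesis by auto
    next
      case False
      then show ?thesis using EFn by blast
    qed
  qed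
  have avg: "avg_freshness le l n (S0 n) = fp le l n 1" if n: "n > 0" for n
    unfolding avg_freshness_def using EFn[OF n] by (intro tendsto_Lim) auto
  have ev: "eventually (\<lambda>n. real n * fp le l n 1 = real n * avg_freshness le l n (S0 n)) sequentially"
    using avg by (intro eventually_sequentiallyI[of 1]) auto
  have c3': "(\<lambda>n. real n * avg_freshness le l n (S0 n)) \<longlonglongrightarrow> AA + BB"
    using limit tendsto_cong[OF ev] by simp
  have AB: "AA + BB = 1 / (le / l) + 1 / (le / l) ^ 2"
    unfolding AA_def BB_def using assms by (simp add: field_simps power2_eq_square)
  have ev2: "eventually (\<lambda>n. inverse (real n) * (real n * avg_freshness le l n (S0 n)) = avg_freshness le l n (S0 n)) sequentially"
    by (intro eventually_sequentiallyI[of 1]) auto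
  have "(\<lambda>n. inverse (real n) * (real n * avg_freshness le l n (S0 n))) \<longlonglongrightarrow> 0 * (AA + BB)"
    by (intro tendsto_mult lim_inverse_n c3')
  then have c2: "(\<lambda>n. avg_freshness le l n (S0 n)) \<longlonglongrightarrow> 0"
    using tendsto_cong[OF ev2] by simp
  show ?thesis using c1 c2 c3' AB by simp
qed

end
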